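(* For $\varepsilon\in(0,1/2)$, any procedure that, given independent copies of two unknown pure quantum states $\ket{\varphi}$ and $\ket{\psi}$, estimates their trace distance $\mathrm{T}(\ket{\varphi},\ket{\psi})$ to within additive error $\varepsilon$ with probability at least $2/3$ (for all pairs of pure states) requires $\Omega(1/\varepsilon^2)$ independent samples of them.
   Context: For pure states, $\mathrm{T}(\ket{\varphi},\ket{\psi})=\tfrac12\operatorname{tr}\bigl|\ket{\varphi}\bra{\varphi}-\ket{\psi}\bra{\psi}\bigr|=\sqrt{1-|\braket{\varphi}{\psi}|^2}$. Sample access: the procedure receives $S$ copies of each state (i.e., $\ket{\varphi}^{\otimes S}\otimes\ket{\psi}^{\otimes S}$) and may perform any quantum operation/measurement on them; $S$ is the sample complexity. *)

theory Defs
  imports "HOL-Analysis.Analysis"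
begin

text \<open>Pure states on C^d are represented as functions nat => complex, of which
only the entries 0..d-1 are used. Basis vectors of the n-fold tensor product
(C^d)^{\<otimes> n} are indexed by lists of length n with entries < d.
Operators on it are functions nat list => nat list => complex (matrix entries).\<close>

definition idx :: "nat \<Rightarrow> nat \<Rightarrow> nat list set" where
  "idx d n = {is. length is = n \<and> set is \<subseteq> {..<d}}"

definition inner_d :: "nat \<Rightarrow> (nat \<Rightarrow> complex) \<Rightarrow> (nat \<Rightarrow> complex) \<Rightarrow> complex" where
  "inner_d d u v = (\<Sum>i<d. cnj (u i) * v i)"

definition unit_state :: "nat \<Rightarrow> (nat \<Rightarrow> complex) \<Rightarrow> bool" where
  "unit_state d u \<longleftrightarrow> (\<Sum>i<d. (cmod (u i))\<^sup>2) = 1"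

definition trace_dist :: "nat \<Rightarrow> (nat \<Rightarrow> complex) \<Rightarrow> (nat \<Rightarrow> complex) \<Rightarrow> real" where
  "trace_dist d u v = sqrt (1 - (cmod (inner_d d u v))\<^sup>2)"

text \<open>Amplitudes of the state |phi>^{\<otimes> S} \<otimes> |psi>^{\<otimes> S} on index lists of length 2S.\<close>
definition copies_state :: "nat \<Rightarrow> (nat \<Rightarrow> complex) \<Rightarrow> (nat \<Rightarrow> complex) \<Rightarrow> nat list \<Rightarrow> complex" where
  "copies_state S u v is = (\<Prod>k<S. u (is ! k)) * (\<Prod>k<S. v (is ! (S + k)))"

definition psd_on :: "nat list set \<Rightarrow> (nat list \<Rightarrow> nat list \<Rightarrow> complex) \<Rightarrow> bool" where
  "psd_on I E \<longleftrightarrow> (\<forall>w. (\<Sum>i\<in>I. \<Sum>j\<in>I. cnj (w i) * E i j * w j) \<in> \<real> \<and>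
                          Re (\<Sum>i\<in>I. \<Sum>j\<in>I. cnj (w i) * E i j * w j) \<ge> 0)"

definition povm :: "nat \<Rightarrow> nat \<Rightarrow> (real set \<Rightarrow> nat list \<Rightarrow> nat list \<Rightarrow> complex) \<Rightarrow> bool" where
  "povm d n M \<longleftrightarrow>
     (\<forall>A \<in> sets borel. psd_on (idx d n) (M A)) \<and>
     (\<forall>i\<in>idx d n. \<forall>j\<in>idx d n. M UNIV i j = (if i = j then 1 else 0)) \<and>
     (\<forall>A \<in> sets borel. \<forall>B \<in> sets borel. A \<inter> B = {} \<longrightarrow>
        (\<forall>i\<in>idx d n. \<forall>j\<in>idx d n. M (A \<union> B) i j = M A i j + M B i j))"

definition outcome_prob :: "nat \<Rightarrow> nat \<Rightarrow> (real set \<Rightarrow> nat list \<Rightarrow> nat list \<Rightarrow> complex)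
     \<Rightarrow> (nat list \<Rightarrow> complex) \<Rightarrow> real set \<Rightarrow> real" where
  "outcome_prob d n M w A = Re (\<Sum>i\<in>idx d n. \<Sum>j\<in>idx d n. cnj (w i) * M A i j * w j)"

definition td_estimator :: "nat \<Rightarrow> nat \<Rightarrow> real \<Rightarrow> (real set \<Rightarrow> nat list \<Rightarrow> nat list \<Rightarrow> complex) \<Rightarrow> bool" where
  "td_estimator d S eps M \<longleftrightarrow> povm d (2 * S) M \<and>
     (\<forall>u v. unit_state d u \<longrightarrow> unit_state d v \<longrightarrow>
        outcome_prob d (2 * S) M (copies_state S u v)
          {x. \<bar>x - trace_dist d u v\<bar> \<le> eps} \<ge> 2 / 3)"

end

theory Submission
  imports Defs
begin

definition Qf :: "nat list set \<Rightarrow> (nat list \<Rightarrow> nat list \<Rightarrow> complex) \<Rightarrow> (nat list \<Rightarrow> complex) \<Rightarrow> complex" where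
  "Qf I E x = (\<Sum>i\<in>I. \<Sum>j\<in>I. cnj (x i) * E i j * x j)"

definition Nn :: "nat list set \<Rightarrow> (nat list \<Rightarrow> complex) \<Rightarrow> real" where
  "Nn I x = (\<Sum>i\<in>I. (cmod (x i))\<^sup>2)"

lemma finite_idx: "finite (idx d n)"
proof -
  have "idx d n = {xs. set xs \<subseteq> {..<d} \<and> length xs = n}" unfolding idx_def by auto
  then show ?thesis using finite_lists_length_eq[of "{..<d}" n] by simp
qed

lemma key_ident:
  fixes a b :: real
  assumes "a * b = 1"
  shows "Qf I E (\<lambda>i. v i + w i) = Qf I E v + Qf I E w +
     (Qf I E (\<lambda>i. of_real a * v i + of_real b * w i) - Qf I E (\<lambda>i. of_real a * v i - of_real b * w i)) / 2"
proof -
  have t: "cnj (v i + w i) * E i j * (v j + w j) = cnj (v i) * E i j * v j + cnj (w i) * E i j * w j +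
     (cnj (of_real a * v i + of_real b * w i) * E i j * (of_real a * v j + of_real b * w j)
      - cnj (of_real a * v i - of_real b * w i) * E i j * (of_real a * v j - of_real b * w j)) / 2" for i j
  proof -
    have ab: "(of_real a :: complex) * of_real b = 1" using assms by (metis of_real_1 of_real_mult)
    have e: "cnj (of_real a * x + of_real b * y) * z * (of_real a * x' + of_real b * y') - cnj (of_real a * x - of_real b * y) * z * (of_real a * x' - of_real b * y')
      = 2 * (of_real a * of_real b) * (cnj x * z * y' + cnj y * z * x')" for x y z x' y' :: complex
      by (simp add: algebra_simps)
    show ?thesis unfolding e ab by (simp add: algebra_simps)
  qed
  show ?thesis unfolding Qf_def t
    by (simp only: sum.distrib sum_subtractf sum_divide_distrib[symmetric])
qed

lemma sq_sum: "(p + q)\<^sup>2 \<le> 2 * p\<^sup>2 + 2 * (q::real)\<^sup>2"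
proof -
  have "0 \<le> (p - q)\<^sup>2" by simp
  then show ?thesis by (simp add: power2_eq_square algebra_simps)
qed

lemma norm_tri:
  fixes a b :: real
  shows "Nn I (\<lambda>i. of_real a * v i - of_real b * w i) \<le> 2 * a\<^sup>2 * Nn I v + 2 * b\<^sup>2 * Nn I w"
proof -
  have "(cmod (of_real a * v i - of_real b * w i))\<^sup>2 \<le> 2 * a\<^sup>2 * (cmod (v i))\<^sup>2 + 2 * b\<^sup>2 * (cmod (w i))\<^sup>2" for i
  proof -
    have h1: "cmod (of_real a * v i - of_real b * w i) \<le> \<bar>a\<bar> * cmod (v i) + \<bar>b\<bar> * cmod (w i)"
      using norm_triangle_ineq4[of "of_real a * v i" "of_real b * w i"] by (simp add: norm_mult)
    have "(cmod (of_real a * v i - of_real b * w i))\<^sup>2 \<le> (\<bar>a\<bar> * cmod (v i) + \<bar>b\<bar> * cmod (w i))\<^sup>2"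
      using h1 by (simp add: power_mono)
    also have "\<dots> \<le> 2 * a\<^sup>2 * (cmod (v i))\<^sup>2 + 2 * b\<^sup>2 * (cmod (w i))\<^sup>2"
      using sq_sum[of "\<bar>a\<bar> * cmod (v i)" "\<bar>b\<bar> * cmod (w i)"] by (simp add: power_mult_distrib)
    finally show ?thesis .
  qed
  then have "Nn I (\<lambda>i. of_real a * v i - of_real b * w i) \<le> (\<Sum>i\<in>I. 2 * a\<^sup>2 * (cmod (v i))\<^sup>2 + 2 * b\<^sup>2 * (cmod (w i))\<^sup>2)"
    unfolding Nn_def by (rule sum_mono)
  also have "\<dots> = 2 * a\<^sup>2 * Nn I v + 2 * b\<^sup>2 * Nn I w"
    unfolding Nn_def by (simp add: sum.distrib sum_distrib_left)
  finally show ?thesis .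
qed

lemma diff_bound:
  assumes pos: "\<forall>x. 0 \<le> Re (Qf I E x)" and le: "\<forall>x. Re (Qf I E x) \<le> Nn I x"
  shows "Re (Qf I E v) - Re (Qf I E w) \<le> Nn I v / 9 + 9 * Nn I (\<lambda>i. w i - v i)"
proof -
  define dd where "dd = (\<lambda>i. w i - v i)"
  have w: "w = (\<lambda>i. v i + dd i)" unfolding dd_def by auto
  have id: "Qf I E w = Qf I E v + Qf I E dd +
     (Qf I E (\<lambda>i. of_real (1/3) * v i + of_real 3 * dd i) - Qf I E (\<lambda>i. of_real (1/3) * v i - of_real 3 * dd i)) / 2"
    unfolding w by (rule key_ident) simp
  have "Re (Qf I E v) - Re (Qf I E w) = - Re (Qf I E dd) - Re (Qf I E (\<lambda>i. of_real (1/3) * v i + of_real 3 * dd i)) / 2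
      + Re (Qf I E (\<lambda>i. of_real (1/3) * v i - of_real 3 * dd i)) / 2"
    unfolding id by (simp add: diff_divide_distrib)
  also have "\<dots> \<le> Re (Qf I E (\<lambda>i. of_real (1/3) * v i - of_real 3 * dd i)) / 2"
    using pos[rule_format, of dd] pos[rule_format, of "\<lambda>i. of_real (1/3) * v i + of_real 3 * dd i"] by linarith
  also have "\<dots> \<le> Nn I (\<lambda>i. of_real (1/3) * v i - of_real 3 * dd i) / 2"
    using le[rule_format, of "\<lambda>i. of_real (1/3) * v i - of_real 3 * dd i"] by linarith
  also have "\<dots> \<le> (2 * (1/3)\<^sup>2 * Nn I v + 2 * 3\<^sup>2 * Nn I dd) / 2"
    by (rule divide_right_mono[OF norm_tri]) simp
  also have "\<dots> = Nn I v / 9 + 9 * Nn I dd" by (simp add: power2_eq_square)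
  finally show ?thesis unfolding dd_def .
qed

lemma idx_Suc: "idx d (Suc n) = (\<lambda>(i, l). i # l) ` ({..<d} \<times> idx d n)"
proof (rule set_eqI)
  fix l show "l \<in> idx d (Suc n) \<longleftrightarrow> l \<in> (\<lambda>(i, l). i # l) ` ({..<d} \<times> idx d n)"
  proof
    assume "l \<in> idx d (Suc n)"
    then obtain i l' where "l = i # l'" "length l' = n" "i < d" "set l' \<subseteq> {..<d}"
      unfolding idx_def by (cases l) auto
    then show "l \<in> (\<lambda>(i, l). i # l) ` ({..<d} \<times> idx d n)" unfolding idx_def by force
  qed (auto simp: idx_def)
qed

lemma sum_idx_prod:
  fixes f :: "nat \<Rightarrow> nat \<Rightarrow> complex"
  shows "(\<Sum>l\<in>idx d n. \<Prod>k<n. f k (l ! k)) = (\<Prod>k<n. \<Sum>i<d. f k i)"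
proof (induction n arbitrary: f)
  case 0
  have "idx d 0 = {[]}" unfolding idx_def by auto
  then show ?case by simp
next
  case (Suc n)
  have inj: "inj_on (\<lambda>(i, l). i # l) ({..<d} \<times> idx d n)" by (auto simp: inj_on_def)
  have "(\<Sum>l\<in>idx d (Suc n). \<Prod>k<Suc n. f k (l ! k))
      = (\<Sum>p\<in>{..<d} \<times> idx d n. (\<lambda>l. \<Prod>k<Suc n. f k (l ! k)) ((\<lambda>(i, l). i # l) p))"
    unfolding idx_Suc by (rule sum.reindex[OF inj, unfolded comp_def])
  also have "\<dots> = (\<Sum>i<d. \<Sum>l\<in>idx d n. \<Prod>k<Suc n. f k ((i # l) ! k))"
    unfolding sum.cartesian_product by (rule sum.cong) auto
  also have "\<dots> = (\<Sum>i<d. f 0 i * (\<Sum>l\<in>idx d n. \<Prod>k<n. f (Suc k) (l ! k)))"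
    by (simp only: prod.lessThan_Suc_shift nth_Cons_0 nth_Cons_Suc sum_distrib_left)
  also have "\<dots> = (\<Sum>i<d. f 0 i) * (\<Prod>k<n. \<Sum>i<d. f (Suc k) i)"
    using Suc.IH[of "\<lambda>k. f (Suc k)"] by (simp add: sum_distrib_right)
  also have "\<dots> = (\<Prod>k<Suc n. \<Sum>i<d. f k i)"
    by (simp only: prod.lessThan_Suc_shift)
  finally show ?case .
qed

lemma prod_split_add:
  fixes h :: "nat \<Rightarrow> complex"
  shows "(\<Prod>k<m + n. h k) = (\<Prod>k<m. h k) * (\<Prod>k<n. h (m + k))"
  by (induction n) (simp_all add: mult.assoc)

lemma copies_prod:
  "copies_state S u v l = (\<Prod>k<2 * S. (if k < S then u else v) (l ! k))"
proof -
  have "(\<Prod>k<2 * S. (if k < S then u else v) (l ! k)) =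
     (\<Prod>k<S. (if k < S then u else v) (l ! k)) * (\<Prod>k<S. (if S + k < S then u else v) (l ! (S + k)))"
    using prod_split_add[of "\<lambda>k. (if k < S then u else v) (l ! k)" S S] by (simp add: mult_2)
  also have "\<dots> = (\<Prod>k<S. u (l ! k)) * (\<Prod>k<S. v (l ! (S + k)))"
    by simp
  finally show ?thesis unfolding copies_state_def by simp
qed

lemma prod_if_split:
  fixes A B :: complex
  shows "(\<Prod>k<2 * S. if k < S then A else B) = A ^ S * B ^ S"
  using prod_split_add[of "\<lambda>k. if k < S then A else B" S S] by (simp add: mult_2)

lemma inner_copies:
  "(\<Sum>l\<in>idx d (2 * S). cnj (copies_state S u v l) * copies_state S u' v' l)
     = (inner_d d u u') ^ S * (inner_d d v v') ^ S"
proof -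
  have "(\<Sum>l\<in>idx d (2 * S). cnj (copies_state S u v l) * copies_state S u' v' l)
     = (\<Sum>l\<in>idx d (2 * S). \<Prod>k<2 * S. cnj ((if k < S then u else v) (l ! k)) * (if k < S then u' else v') (l ! k))"
    unfolding copies_prod by (simp add: prod.distrib)
  also have "\<dots> = (\<Prod>k<2 * S. \<Sum>i<d. cnj ((if k < S then u else v) i) * (if k < S then u' else v') i)"
    by (rule sum_idx_prod)
  also have "\<dots> = (\<Prod>k<2 * S. if k < S then inner_d d u u' else inner_d d v v')"
    unfolding inner_d_def by (rule prod.cong) auto
  also have "\<dots> = (inner_d d u u') ^ S * (inner_d d v v') ^ S" by (rule prod_if_split)
  finally show ?thesis .
qed

lemma sum01:
  fixes f :: "nat \<Rightarrow> 'a::comm_monoid_add"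
  assumes "2 \<le> d" "\<And>i. 2 \<le> i \<Longrightarrow> f i = 0"
  shows "(\<Sum>i<d. f i) = f 0 + f 1"
proof -
  have "(\<Sum>i\<in>{0,1}. f i) = (\<Sum>i<d. f i)"
    by (rule sum.mono_neutral_left) (use assms in auto)
  then show ?thesis by simp
qed

lemma Qf_add:
  assumes "\<forall>i\<in>I. \<forall>j\<in>I. C i j = A i j + B i j"
  shows "Qf I C x = Qf I A x + Qf I B x"
proof -
  have "Qf I C x = (\<Sum>i\<in>I. \<Sum>j\<in>I. cnj (x i) * A i j * x j + cnj (x i) * B i j * x j)"
    unfolding Qf_def by (intro sum.cong refl) (simp add: assms algebra_simps)
  then show ?thesis unfolding Qf_def by (simp add: sum.distrib)
qed

lemma cnj_mult_self: "cnj z * z = complex_of_real ((cmod z)\<^sup>2)"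
  using complex_norm_square[of z] by (simp only: mult.commute)

lemma Nn_as: "Nn I x = Re (\<Sum>i\<in>I. cnj (x i) * x i)"
  unfolding Nn_def by (simp add: cnj_mult_self)

lemma Qf_id:
  assumes "finite I" "\<forall>i\<in>I. \<forall>j\<in>I. E i j = (if i = j then 1 else 0)"
  shows "Re (Qf I E x) = Nn I x"
proof -
  have "Qf I E x = (\<Sum>i\<in>I. \<Sum>j\<in>I. if i = j then cnj (x i) * x j else 0)"
    unfolding Qf_def by (intro sum.cong refl) (simp add: assms)
  also have "\<dots> = (\<Sum>i\<in>I. cnj (x i) * x i)"
    using assms(1) by simp
  finally show ?thesis by (simp add: Nn_as)
qed

lemma bern: assumes "0 \<le> (x::real)" "x \<le> 1" shows "1 - x ^ n \<le> real n * (1 - x)"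
proof (induction n)
  case 0 then show ?case by simp
next
  case (Suc n)
  have "x ^ n * (1 - x) \<le> 1 * (1 - x)"
    using assms by (intro mult_right_mono) (simp_all add: power_le_one)
  then show ?case using Suc by (simp add: algebra_simps)
qed

lemma sqrt_ge_self: assumes "0 \<le> (y::real)" "y \<le> 1" shows "y \<le> sqrt y"
proof -
  have "sqrt y \<le> 1" using assms by simp
  then have "sqrt y * sqrt y \<le> sqrt y * 1" using assms by (intro mult_left_mono) simp_all
  then show ?thesis using assms by simp
qed

lemma interval_borel: "{x::real. \<bar>x - a\<bar> \<le> e} \<in> sets borel"
proof -
  have "{x::real. \<bar>x - a\<bar> \<le> e} = {a - e..a + e}" by auto
  then show ?thesis by (simp add: borel_closed)
qed

lemma main_bound:
  assumes e0: "0 < eps" and e1: "eps < 1 / 2" and d2: "2 \<le> d" and est: "td_estimator d S eps M"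
  shows "1 / 1296 / eps\<^sup>2 \<le> real S"
proof -
  define s where "s = 4 * eps / (1 + 2 * eps)"
  define cc where "cc = sqrt (1 - s\<^sup>2)"
  have s_gt: "2 * eps < s" unfolding s_def using e0 e1 by (simp add: field_simps)
  have s_lt: "s < 1" unfolding s_def using e0 e1 by (simp add: field_simps)
  have s_le: "s \<le> 4 * eps" unfolding s_def using e0 by (simp add: field_simps)
  have s_pos: "0 < s" using s_gt e0 by simp
  have s2: "s\<^sup>2 \<le> 1" using s_lt s_pos by (simp add: power_le_one)
  have s2lt: "s\<^sup>2 < 1" using s_lt s_pos by (simp add: power_less_one_iff)
  have cc_sq: "cc\<^sup>2 = 1 - s\<^sup>2" unfolding cc_def using s2 by simp
  have cc_nn: "0 \<le> cc" unfolding cc_def using s2 by simp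
  have cc_le: "cc \<le> 1" unfolding cc_def using s2 by simp
  have cc_ge: "1 - s\<^sup>2 \<le> cc" unfolding cc_def using s2 by (intro sqrt_ge_self) simp_all
  define u0 :: "nat \<Rightarrow> complex" where "u0 = (\<lambda>i. if i = 0 then 1 else 0)"
  define u1 :: "nat \<Rightarrow> complex" where "u1 = (\<lambda>i. if i = 0 then of_real cc else if i = 1 then of_real s else 0)"
  have i00: "inner_d d u0 u0 = 1" unfolding inner_d_def
    by (subst sum01[OF d2]) (simp_all add: u0_def)
  have i01: "inner_d d u0 u1 = of_real cc" unfolding inner_d_def
    by (subst sum01[OF d2]) (simp_all add: u0_def u1_def)
  have i10: "inner_d d u1 u0 = of_real cc" unfolding inner_d_def
    by (subst sum01[OF d2]) (simp_all add: u0_def u1_def)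
  have i11: "inner_d d u1 u1 = 1" unfolding inner_d_def
  proof (subst sum01[OF d2])
    show "cnj (u1 0) * u1 0 + cnj (u1 1) * u1 1 = 1"
      using cc_sq by (simp add: u1_def power2_eq_square flip: of_real_mult of_real_add)
  qed (simp add: u1_def)
  have us0: "unit_state d u0" unfolding unit_state_def
    by (subst sum01[OF d2]) (simp_all add: u0_def)
  have us1: "unit_state d u1" unfolding unit_state_def
    by (subst sum01[OF d2]) (simp_all add: u1_def cc_sq)
  have td0: "trace_dist d u0 u0 = 0" unfolding trace_dist_def i00 by simp
  have td1: "trace_dist d u0 u1 = s" unfolding trace_dist_def i01 using cc_sq s_pos by simp
  define I where "I = idx d (2 * S)"
  have finI: "finite I" unfolding I_def by (rule finite_idx)
  define Phi where "Phi = copies_state S u0 u0"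
  define Psi where "Psi = copies_state S u0 u1"
  define A1 where "A1 = {x::real. \<bar>x - 0\<bar> \<le> eps}"
  define A2 where "A2 = {x::real. \<bar>x - s\<bar> \<le> eps}"
  have povm: "povm d (2 * S) M" using est unfolding td_estimator_def by simp
  have op: "outcome_prob d (2 * S) M w A = Re (Qf I (M A) w)" for w A
    unfolding outcome_prob_def Qf_def I_def by simp
  have p1: "Re (Qf I (M A1) Phi) \<ge> 2 / 3"
    using est us0 unfolding td_estimator_def A1_def Phi_def op[symmetric] by (metis td0)
  have p2: "Re (Qf I (M A2) Psi) \<ge> 2 / 3"
    using est us0 us1 unfolding td_estimator_def A2_def Psi_def op[symmetric] by (metis td1)
  have bA1: "A1 \<in> sets borel" unfolding A1_def by (rule interval_borel)
  have bA2: "A2 \<in> sets borel" unfolding A2_def by (rule interval_borel)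
  have bC: "- A1 \<in> sets borel" using bA1 by (rule borel_comp)
  have bR: "- A1 - A2 \<in> sets borel" using bC bA2 by (rule sets.Diff)
  have psd: "\<And>A x. A \<in> sets borel \<Longrightarrow> 0 \<le> Re (Qf I (M A) x)"
    using povm unfolding povm_def psd_on_def Qf_def I_def by blast
  have addM: "\<And>A B. A \<in> sets borel \<Longrightarrow> B \<in> sets borel \<Longrightarrow> A \<inter> B = {} \<Longrightarrow>
      \<forall>i\<in>I. \<forall>j\<in>I. M (A \<union> B) i j = M A i j + M B i j"
    using povm unfolding povm_def I_def by blast
  have idM: "\<forall>i\<in>I. \<forall>j\<in>I. M UNIV i j = (if i = j then 1 else 0)"
    using povm unfolding povm_def I_def by blast
  have split1: "Qf I (M UNIV) x = Qf I (M A1) x + Qf I (M (- A1)) x" for x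
  proof -
    have "A1 \<union> - A1 = UNIV" by auto
    then show ?thesis using Qf_add[OF addM[OF bA1 bC]] by simp
  qed
  have disj: "A1 \<inter> A2 = {}" unfolding A1_def A2_def using s_gt by auto
  have split2: "Qf I (M (- A1)) x = Qf I (M A2) x + Qf I (M (- A1 - A2)) x" for x
  proof -
    have "A2 \<union> (- A1 - A2) = - A1" using disj by auto
    then show ?thesis using Qf_add[OF addM[OF bA2 bR]] by auto
  qed
  have le: "\<forall>x. Re (Qf I (M A1) x) \<le> Nn I x"
  proof
    fix x
    have "Nn I x = Re (Qf I (M A1) x) + Re (Qf I (M (- A1)) x)"
      using Qf_id[OF finI idM, of x] split1[of x] by simp
    then show "Re (Qf I (M A1) x) \<le> Nn I x" using psd[OF bC, of x] by simp
  qed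
  have pos: "\<forall>x. 0 \<le> Re (Qf I (M A1) x)" using psd[OF bA1] by blast
  have NPhi: "Nn I Phi = 1"
    unfolding Nn_as I_def Phi_def inner_copies i00 by simp
  have NPsi: "Nn I Psi = 1"
    unfolding Nn_as I_def Psi_def inner_copies i00 i11 by simp
  have q2: "Re (Qf I (M A1) Psi) \<le> 1 / 3"
  proof -
    have "1 = Re (Qf I (M A1) Psi) + Re (Qf I (M A2) Psi) + Re (Qf I (M (- A1 - A2)) Psi)"
      using Qf_id[OF finI idM, of Psi] split1[of Psi] split2[of Psi] NPsi by simp
    then show ?thesis using p2 psd[OF bR, of Psi] by linarith
  qed
  have db: "Re (Qf I (M A1) Phi) - Re (Qf I (M A1) Psi) \<le> Nn I Phi / 9 + 9 * Nn I (\<lambda>i. Psi i - Phi i)"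
    by (rule diff_bound[OF pos le])
  have Nd: "Nn I (\<lambda>i. Psi i - Phi i) = 2 - 2 * cc ^ S"
  proof -
    have "(\<Sum>i\<in>I. cnj (Psi i - Phi i) * (Psi i - Phi i)) =
        (\<Sum>i\<in>I. cnj (Psi i) * Psi i) - (\<Sum>i\<in>I. cnj (Psi i) * Phi i)
        - (\<Sum>i\<in>I. cnj (Phi i) * Psi i) + (\<Sum>i\<in>I. cnj (Phi i) * Phi i)"
      by (simp add: algebra_simps sum.distrib sum_subtractf)
    also have "\<dots> = 2 - 2 * of_real (cc ^ S)"
      unfolding I_def Psi_def Phi_def inner_copies i00 i01 i10 i11 by simp
    finally show ?thesis unfolding Nn_as by simp
  qed
  have "1 / 3 \<le> 1 / 9 + 9 * (2 - 2 * cc ^ S)"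
    using db p1 q2 unfolding NPhi Nd by linarith
  then have h1: "1 / 81 \<le> 1 - cc ^ S" by (simp add: algebra_simps)
  have "1 - cc ^ S \<le> real S * (1 - cc)" by (rule bern[OF cc_nn cc_le])
  also have "\<dots> \<le> real S * s\<^sup>2" using cc_ge by (intro mult_left_mono) simp_all
  also have "\<dots> \<le> real S * (16 * eps\<^sup>2)"
  proof -
    have "s\<^sup>2 \<le> (4 * eps)\<^sup>2" using s_le s_pos by (intro power_mono) simp_all
    then show ?thesis by (intro mult_left_mono) (simp_all add: power_mult_distrib)
  qed
  finally have "1 / 81 \<le> real S * (16 * eps\<^sup>2)" using h1 by linarith
  then have "1 / 1296 \<le> real S * eps\<^sup>2" by simp
  then show ?thesis using e0 by (simp add: divide_le_eq)
qed

theorem theoremB2: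
  "\<exists>c > 0. \<forall>eps d S M. 0 < eps \<longrightarrow> eps < 1 / 2 \<longrightarrow> 2 \<le> d \<longrightarrow>
      td_estimator d S eps M \<longrightarrow> real S \<ge> c / eps\<^sup>2"
proof (rule exI[of _ "1 / 1296"], intro conjI allI impI)
  fix eps :: real and d S M
  assume "0 < eps" "eps < 1 / 2" "2 \<le> d" "td_estimator d S eps M"
  then show "1 / 1296 / eps\<^sup>2 \<le> real S" by (rule main_bound)
qed simp

end
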